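(* Let $n=p_1^{m_1}\cdots p_k^{m_k}$ be such that $\mathcal E_{\mathbb Z_n}$ has at least two vertices (i.e. $n$ is neither prime nor the square of a prime). Then the complement graph $\overline{\mathcal E_{\mathbb Z_n}}$ is connected if and only if $n=p_1p_2\cdots p_k$ is squarefree with $k\ge 3$.
   Context: Primes $p_1<\dots<p_k$, positive integers $m_i$. The essential ideal graph $\mathcal E_{\mathbb Z_n}$ has vertices the nonzero proper ideals of $\mathbb Z_n$, with distinct $I,K$ adjacent iff $I+K$ is essential (an ideal is essential if it meets every nonzero ideal nontrivially; a nonzero ideal $\langle p_1^{r_1}\cdots p_k^{r_k}\rangle$, $0\le r_i\le m_i$, is essential iff $r_j\ne m_j$ for all $j$). $\overline\Gamma$ denotes the complement of $\Gamma$. *)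

theory Defs
  imports "HOL-Algebra.Algebra" "HOL-Number_Theory.Residues" "HOL-Computational_Algebra.Squarefree"
begin

abbreviation Zn :: "nat \<Rightarrow> int ring" where
  "Zn n \<equiv> residue_ring (int n)"

definition essential_ideal :: "('a, 'b) ring_scheme \<Rightarrow> 'a set \<Rightarrow> bool" where
  "essential_ideal R E \<longleftrightarrow> ideal E R \<and>
     (\<forall>J. ideal J R \<and> J \<noteq> {\<zero>\<^bsub>R\<^esub>} \<longrightarrow> E \<inter> J \<noteq> {\<zero>\<^bsub>R\<^esub>})"

definition EIG_vertices :: "('a, 'b) ring_scheme \<Rightarrow> 'a set set" where
  "EIG_vertices R = {I. ideal I R \<and> I \<noteq> {\<zero>\<^bsub>R\<^esub>} \<and> I \<noteq> carrier R}"

definition EIG_adj :: "('a, 'b) ring_scheme \<Rightarrow> 'a set \<Rightarrow> 'a set \<Rightarrow> bool" where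
  "EIG_adj R I K \<longleftrightarrow> I \<in> EIG_vertices R \<and> K \<in> EIG_vertices R \<and> I \<noteq> K \<and>
     essential_ideal R (set_add R I K)"

definition EIG_compl_adj :: "('a, 'b) ring_scheme \<Rightarrow> 'a set \<Rightarrow> 'a set \<Rightarrow> bool" where
  "EIG_compl_adj R I K \<longleftrightarrow> I \<in> EIG_vertices R \<and> K \<in> EIG_vertices R \<and> I \<noteq> K \<and>
     \<not> EIG_adj R I K"

definition graph_connected :: "'v set \<Rightarrow> ('v \<Rightarrow> 'v \<Rightarrow> bool) \<Rightarrow> bool" where
  "graph_connected V E \<longleftrightarrow> (\<forall>u\<in>V. \<forall>v\<in>V. E\<^sup>*\<^sup>* u v)"

end

theory Submission
  imports Defs
begin

definition IdZ :: "nat \<Rightarrow> nat \<Rightarrow> int set" where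
  "IdZ n d = {x. 0 \<le> x \<and> x < int n \<and> int d dvd x}"

lemma Zn_simps:
  "carrier (Zn n) = {0..int n - 1}" "\<zero>\<^bsub>Zn n\<^esub> = 0"
  "x \<oplus>\<^bsub>Zn n\<^esub> y = (x + y) mod int n" "x \<otimes>\<^bsub>Zn n\<^esub> y = (x * y) mod int n"
  by (simp_all add: residue_ring_def)

lemma Zn_cring: "n \<ge> 2 \<Longrightarrow> cring (Zn n)"
  by (rule residues.cring) (simp add: residues_def)

lemma ideal_Id:
  assumes n: "n \<ge> 2" and d: "d dvd n"
  shows "ideal (IdZ n d) (Zn n)"
proof -
  interpret cring "Zn n" using Zn_cring[OF n] .
  have a: "int d mod int n \<in> carrier (Zn n)" using n by (simp add: Zn_simps)
  have "PIdl\<^bsub>Zn n\<^esub> (int d mod int n) = IdZ n d"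
  proof
    show "PIdl\<^bsub>Zn n\<^esub> (int d mod int n) \<subseteq> IdZ n d"
    proof
      fix y assume "y \<in> PIdl\<^bsub>Zn n\<^esub> (int d mod int n)"
      then obtain x where y: "y = (x * (int d mod int n)) mod int n"
        by (auto simp: cgenideal_def Zn_simps)
      have dn: "int d dvd int n" using d by simp
      have "int d dvd int d mod int n" using dn by (simp add: dvd_mod)
      hence "int d dvd x * (int d mod int n)" by simp
      hence "int d dvd y" using dn y by (simp add: dvd_mod)
      moreover have "int n > 0" using n by simp
      ultimately show "y \<in> IdZ n d" using y by (simp add: IdZ_def)
    qed
  next
    show "IdZ n d \<subseteq> PIdl\<^bsub>Zn n\<^esub> (int d mod int n)"
    proof
      fix y assume "y \<in> IdZ n d"
      then obtain c where y: "y = int d * c" "0 \<le> y" "y < int n" by (auto simp: IdZ_def)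
      have "(c mod int n) * (int d mod int n) mod int n = (int d * c) mod int n"
        by (simp add: mod_mult_eq mult.commute)
      also have "\<dots> = y" using y by simp
      finally have "y = (c mod int n) \<otimes>\<^bsub>Zn n\<^esub> (int d mod int n)" by (simp add: Zn_simps)
      moreover have "c mod int n \<in> carrier (Zn n)" using n by (simp add: Zn_simps)
      ultimately show "y \<in> PIdl\<^bsub>Zn n\<^esub> (int d mod int n)" by (auto simp: cgenideal_def)
    qed
  qed
  thus ?thesis using cgenideal_ideal[OF a] by simp
qed

lemma ideal_char:
  assumes n: "n \<ge> 2" and I: "ideal I (Zn n)"
  shows "\<exists>d. d dvd n \<and> I = IdZ n d"
proof -
  interpret cring "Zn n" using Zn_cring[OF n] .
  define N where "N = int n"
  have N: "N \<ge> 2" using n by (simp add: N_def)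
  have sub: "I \<subseteq> {0..N - 1}" using ideal.axioms(1)[OF I] additive_subgroup.a_subset
    by (metis N_def Zn_simps(1))
  have zero: "0 \<in> I" using ideal.axioms(1)[OF I] additive_subgroup.zero_closed
    by (metis Zn_simps(2))
  have addc: "(x + y) mod N \<in> I" if "x \<in> I" "y \<in> I" for x y
    using additive_subgroup.a_closed[OF ideal.axioms(1)[OF I] that] by (simp add: Zn_simps N_def)
  have mulc: "(a * x) mod N \<in> I" if "x \<in> I" for a x
  proof -
    have "a mod N \<in> carrier (Zn n)" using N by (simp add: Zn_simps N_def)
    from ideal.I_l_closed[OF I that this]
    have "((a mod N) * x) mod N \<in> I" by (simp add: Zn_simps N_def)
    thus ?thesis by (simp add: mod_mult_left_eq)
  qed
  have finI: "finite I" using sub finite_subset by blast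
  define d0 where "d0 = Min ((\<lambda>x. gcd x N) ` I)"
  have "d0 \<in> (\<lambda>x. gcd x N) ` I" unfolding d0_def using finI zero by (intro Min_in) auto
  then obtain x0 where x0: "x0 \<in> I" "d0 = gcd x0 N" by auto
  have d0pos: "d0 > 0" using x0 N by simp
  have d0N: "d0 dvd N" using x0 by simp
  have d0le: "d0 \<le> gcd x N" if "x \<in> I" for x unfolding d0_def using finI that by simp
  have d0I: "d0 mod N \<in> I"
  proof -
    obtain u v where uv: "u * x0 + v * N = gcd x0 N" using bezout_int by blast
    have "(u * x0) mod N \<in> I" using mulc x0 by simp
    moreover have "(u * x0) mod N = d0 mod N"
      using uv x0 by (metis mod_mult_self1)
    ultimately show ?thesis by simp
  qed
  have dvdI: "d0 dvd y" if y: "y \<in> I" for y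
  proof -
    obtain u v where uv: "u * d0 + v * y = gcd d0 y" using bezout_int by blast
    define w where "w = ((u * (d0 mod N)) mod N + (v * y) mod N) mod N"
    have wI: "w \<in> I" unfolding w_def using addc mulc d0I y by blast
    have "w = (u * d0 + v * y) mod N" unfolding w_def by (simp add: mod_add_eq mod_mult_right_eq)
    hence w: "w = gcd d0 y mod N" using uv by simp
    have "gcd w N = gcd (gcd d0 y) N" using w N by (simp add: gcd_mod_left)
    also have "\<dots> = gcd d0 y"
    proof -
      have "gcd d0 y dvd N" using d0N by (meson dvd_trans gcd_dvd1)
      thus ?thesis by (simp add: gcd_proj1_if_dvd)
    qed
    finally have "d0 \<le> gcd d0 y" using d0le[OF wI] by simp
    moreover have "gcd d0 y \<le> d0" using d0pos by (simp add: zdvd_imp_le)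
    ultimately have "gcd d0 y = d0" by simp
    thus ?thesis by (metis gcd_dvd2)
  qed
  define d where "d = nat d0"
  have dd: "int d = d0" using d0pos by (simp add: d_def)
  have "d dvd n" using d0N dd by (metis N_def int_dvd_int_iff)
  moreover have "I = IdZ n d"
  proof
    show "I \<subseteq> IdZ n d"
    proof
      fix x assume x: "x \<in> I"
      hence "x \<in> {0..N-1}" using sub by blast
      thus "x \<in> IdZ n d" using dvdI[OF x] dd by (auto simp: IdZ_def N_def)
    qed
  next
    show "IdZ n d \<subseteq> I"
    proof
      fix y assume "y \<in> IdZ n d"
      then obtain c where y: "y = d0 * c" "0 \<le> y" "y < N" by (auto simp: IdZ_def N_def dd)
      have "(c * (d0 mod N)) mod N \<in> I" using mulc d0I by blast
      moreover have "(c * (d0 mod N)) mod N = y" using y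
        by (simp add: mod_mult_right_eq mult.commute)
      ultimately show "y \<in> I" by simp
    qed
  qed
  ultimately show ?thesis by blast
qed


lemma IdZ_zero: assumes n: "n \<ge> 2" and d: "d dvd n" shows "IdZ n d = {0} \<longleftrightarrow> d = n"
proof
  assume "IdZ n d = {0}"
  show "d = n"
  proof (rule ccontr)
    assume "d \<noteq> n"
    moreover have "d \<le> n" using d n by (intro dvd_imp_le) auto
    moreover have dz: "d \<noteq> 0" using d n by (cases "d = 0") auto
    ultimately have "int d \<in> IdZ n d" using d n by (auto simp: IdZ_def)
    with dz show False using \<open>IdZ n d = {0}\<close> by auto
  qed
next
  assume "d = n"
  thus "IdZ n d = {0}" using n by (auto simp: IdZ_def zdvd_imp_le dest: zdvd_imp_le)
qed

lemma IdZ_sub: assumes n: "n \<ge> 2" and d: "d dvd n" and e: "e dvd n"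
  and s: "IdZ n d \<subseteq> IdZ n e" shows "e dvd d"
proof (cases "d = n")
  case True thus ?thesis using e by simp
next
  case False
  moreover have "d \<le> n" using d n by (intro dvd_imp_le) auto
  ultimately have "int d \<in> IdZ n d" using d n by (auto simp: IdZ_def)
  hence "int d \<in> IdZ n e" using s by blast
  thus ?thesis by (simp add: IdZ_def)
qed

lemma IdZ_inj: assumes "n \<ge> 2" "d dvd n" "e dvd n" "IdZ n d = IdZ n e" shows "d = e"
  using IdZ_sub[OF assms(1,2,3)] IdZ_sub[OF assms(1,3,2)] assms(4) by (simp add: dvd_antisym)

lemma IdZ_one: "IdZ n 1 = carrier (Zn n)" by (auto simp: IdZ_def Zn_simps)

lemma IdZ_carrier: assumes n: "n \<ge> 2" and "IdZ n d = carrier (Zn n)" shows "d = 1"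
proof -
  have "(1::int) \<in> carrier (Zn n)" using n by (simp add: Zn_simps)
  hence "(1::int) \<in> IdZ n d" using assms(2) by (simp only:)
  hence "int d dvd 1" unfolding IdZ_def by blast
  thus ?thesis by simp
qed

lemma IdZ_inter: "IdZ n d \<inter> IdZ n e = IdZ n (lcm d e)"
  by (auto simp: IdZ_def simp flip: lcm_int_int_eq)

lemma IdZ_sum: assumes n: "n \<ge> 2" and d: "d dvd n" and e: "e dvd n"
  shows "set_add (Zn n) (IdZ n d) (IdZ n e) = IdZ n (gcd d e)"
proof -
  interpret cring "Zn n" using Zn_cring[OF n] .
  have "ideal (set_add (Zn n) (IdZ n d) (IdZ n e)) (Zn n)"
    by (rule add_ideals[OF ideal_Id[OF n d] ideal_Id[OF n e]])
  then obtain g where g: "g dvd n" "set_add (Zn n) (IdZ n d) (IdZ n e) = IdZ n g"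
    using ideal_char[OF n] by blast
  have z: "0 \<in> IdZ n d" "0 \<in> IdZ n e" by (auto simp: IdZ_def) (use n in auto)
  have "IdZ n d \<subseteq> IdZ n g"
  proof
    fix x assume x: "x \<in> IdZ n d"
    hence "x = x \<oplus>\<^bsub>Zn n\<^esub> 0" by (auto simp: IdZ_def Zn_simps)
    hence "x \<in> set_add (Zn n) (IdZ n d) (IdZ n e)" using x z by (auto simp: set_add_def')
    thus "x \<in> IdZ n g" using g by simp
  qed
  hence gd: "g dvd d" using IdZ_sub[OF n d g(1)] by simp
  have "IdZ n e \<subseteq> IdZ n g"
  proof
    fix x assume x: "x \<in> IdZ n e"
    hence "x = 0 \<oplus>\<^bsub>Zn n\<^esub> x" by (auto simp: IdZ_def Zn_simps)
    hence "x \<in> set_add (Zn n) (IdZ n d) (IdZ n e)" using x z by (auto simp: set_add_def')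
    thus "x \<in> IdZ n g" using g by simp
  qed
  hence ge: "g dvd e" using IdZ_sub[OF n e g(1)] by simp
  have gn: "gcd d e dvd n" using d by (meson dvd_trans gcd_dvd1)
  have "set_add (Zn n) (IdZ n d) (IdZ n e) \<subseteq> IdZ n (gcd d e)"
  proof
    fix z assume "z \<in> set_add (Zn n) (IdZ n d) (IdZ n e)"
    then obtain x y where xy: "x \<in> IdZ n d" "y \<in> IdZ n e" "z = (x + y) mod int n"
      by (auto simp: set_add_def' Zn_simps)
    have "int (gcd d e) dvd x" using xy(1) by (auto simp: IdZ_def intro: dvd_trans[of _ "int d"])
    moreover have "int (gcd d e) dvd y" using xy(2) by (auto simp: IdZ_def intro: dvd_trans[of _ "int e"])
    ultimately have "int (gcd d e) dvd x + y" by simp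
    moreover have "int (gcd d e) dvd int n" using gn by simp
    ultimately have "int (gcd d e) dvd z" using xy(3) by (simp add: dvd_mod)
    moreover have "int n > 0" using n by simp
    ultimately show "z \<in> IdZ n (gcd d e)" using xy(3) by (simp add: IdZ_def)
  qed
  hence "IdZ n g \<subseteq> IdZ n (gcd d e)" using g by simp
  hence "gcd d e dvd g" using IdZ_sub[OF n g(1) gn] by simp
  moreover have "g dvd gcd d e" using gd ge by simp
  ultimately have "g = gcd d e" by (rule dvd_antisym[rotated])
  thus ?thesis using g(2) by (simp only:)
qed

definition ess :: "nat \<Rightarrow> nat \<Rightarrow> bool" where
  "ess n g \<longleftrightarrow> (\<forall>e. e dvd n \<longrightarrow> e \<noteq> n \<longrightarrow> lcm g e \<noteq> n)"

lemma essential_IdZ: assumes n: "n \<ge> 2" and d: "d dvd n"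
  shows "essential_ideal (Zn n) (IdZ n d) \<longleftrightarrow> ess n d"
proof
  assume E: "essential_ideal (Zn n) (IdZ n d)"
  show "ess n d" unfolding ess_def
  proof (intro allI impI)
    fix e assume e: "e dvd n" "e \<noteq> n"
    have "IdZ n e \<noteq> {0}" using IdZ_zero[OF n e(1)] e by simp
    hence "IdZ n d \<inter> IdZ n e \<noteq> {0}" using E ideal_Id[OF n e(1)]
      unfolding essential_ideal_def by (simp add: Zn_simps)
    hence "IdZ n (lcm d e) \<noteq> {0}" by (simp add: IdZ_inter)
    moreover have "lcm d e dvd n" using d e by simp
    ultimately show "lcm d e \<noteq> n" using IdZ_zero[OF n] by blast
  qed
next
  assume E: "ess n d"
  show "essential_ideal (Zn n) (IdZ n d)" unfolding essential_ideal_def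
  proof (intro conjI allI impI)
    show "ideal (IdZ n d) (Zn n)" by (rule ideal_Id[OF n d])
    fix J assume J: "ideal J (Zn n) \<and> J \<noteq> {\<zero>\<^bsub>Zn n\<^esub>}"
    then obtain e where e: "e dvd n" "J = IdZ n e" using ideal_char[OF n] by blast
    have "e \<noteq> n" using J e IdZ_zero[OF n e(1)] by (simp add: Zn_simps)
    hence "lcm d e \<noteq> n" using E e unfolding ess_def by blast
    moreover have "lcm d e dvd n" using d e by simp
    ultimately have "IdZ n (lcm d e) \<noteq> {0}" using IdZ_zero[OF n] by blast
    thus "IdZ n d \<inter> J \<noteq> {\<zero>\<^bsub>Zn n\<^esub>}" using e by (simp add: IdZ_inter Zn_simps)
  qed
qed

definition Dv :: "nat \<Rightarrow> nat set" where
  "Dv n = {d. d dvd n \<and> d \<noteq> 1 \<and> d \<noteq> n}"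

lemma vertices_eq: assumes n: "n \<ge> 2" shows "EIG_vertices (Zn n) = IdZ n ` Dv n"
proof
  show "EIG_vertices (Zn n) \<subseteq> IdZ n ` Dv n"
  proof
    fix I assume "I \<in> EIG_vertices (Zn n)"
    hence I: "ideal I (Zn n)" "I \<noteq> {0}" "I \<noteq> carrier (Zn n)" by (auto simp: EIG_vertices_def Zn_simps)
    then obtain d where d: "d dvd n" "I = IdZ n d" using ideal_char[OF n] by blast
    have "d \<noteq> n" using I d IdZ_zero[OF n d(1)] by simp
    moreover have "d \<noteq> 1" using I d IdZ_one by metis
    ultimately show "I \<in> IdZ n ` Dv n" using d by (auto simp: Dv_def)
  qed
next
  show "IdZ n ` Dv n \<subseteq> EIG_vertices (Zn n)"
  proof
    fix I assume "I \<in> IdZ n ` Dv n"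
    then obtain d where d: "d dvd n" "d \<noteq> 1" "d \<noteq> n" "I = IdZ n d" by (auto simp: Dv_def)
    have "I \<noteq> {0}" using IdZ_zero[OF n d(1)] d by simp
    moreover have "I \<noteq> carrier (Zn n)" using IdZ_carrier[OF n] d by metis
    ultimately show "I \<in> EIG_vertices (Zn n)" using ideal_Id[OF n d(1)] d
      by (simp add: EIG_vertices_def Zn_simps)
  qed
qed

lemma compl_adj_eq: assumes n: "n \<ge> 2" and d: "d \<in> Dv n" and e: "e \<in> Dv n"
  shows "EIG_compl_adj (Zn n) (IdZ n d) (IdZ n e) \<longleftrightarrow> d \<noteq> e \<and> \<not> ess n (gcd d e)"
proof -
  have V: "IdZ n d \<in> EIG_vertices (Zn n)" "IdZ n e \<in> EIG_vertices (Zn n)"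
    using vertices_eq[OF n] d e by auto
  have dd: "d dvd n" "e dvd n" using d e by (auto simp: Dv_def)
  have neq: "IdZ n d \<noteq> IdZ n e \<longleftrightarrow> d \<noteq> e" using IdZ_inj[OF n dd] by blast
  have gn: "gcd d e dvd n" using dd by (meson dvd_trans gcd_dvd1)
  have "EIG_compl_adj (Zn n) (IdZ n d) (IdZ n e) \<longleftrightarrow>
     IdZ n d \<noteq> IdZ n e \<and> \<not> essential_ideal (Zn n) (set_add (Zn n) (IdZ n d) (IdZ n e))"
    unfolding EIG_compl_adj_def EIG_adj_def using V by blast
  also have "\<dots> \<longleftrightarrow> d \<noteq> e \<and> \<not> ess n (gcd d e)"
    by (simp only: neq IdZ_sum[OF n dd] essential_IdZ[OF n gn])
  finally show ?thesis .
qed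


abbreviation nprime :: "nat \<Rightarrow> bool" where "nprime \<equiv> normalization_semidom_class.prime"

lemma ess_one: "ess n 1" by (simp add: ess_def)

lemma ess_prime_sq: assumes p: "nprime p" and pn: "p^2 dvd n" and n: "n > 0"
  shows "ess n p"
  unfolding ess_def
proof (intro allI impI notI)
  fix e assume e: "e dvd n" "e \<noteq> n" "lcm p e = n"
  show False
  proof (cases "p dvd e")
    case True
    hence "lcm p e = e" by (simp add: lcm_proj2_if_dvd)
    thus False using e by simp
  next
    case False
    hence "coprime p e" using p by (simp add: prime_imp_coprime)
    hence "lcm p e = p * e" by (simp add: lcm_coprime)
    hence ne: "n = p * e" using e by simp
    have "p * p dvd p * e" using pn ne by (simp add: power2_eq_square)
    hence "p dvd e" using p by (simp add: prime_gt_0_nat)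
    thus False using False by simp
  qed
qed

lemma sqf_prime_div: assumes s: "squarefree (n::nat)" and e: "e dvd n"
  and r: "nprime r" "r dvd e" "r dvd n div e" shows False
proof -
  have "r * r dvd e * (n div e)" using r by (simp add: mult_dvd_mono)
  also have "e * (n div e) = n" using e by simp
  finally have "r^2 dvd n" by (simp add: power2_eq_square)
  hence "r dvd 1" using s squarefreeD by blast
  thus False using r by simp
qed

lemma not_ess_sqf: assumes s: "squarefree (n::nat)" and g: "g dvd n" "g \<noteq> 1"
  shows "\<not> ess n g"
proof
  assume E: "ess n g"
  have n0: "n \<noteq> 0" using s by (cases "n = 0") auto
  obtain p where p: "nprime p" "p dvd g" using prime_factor_nat g(2) by blast
  have pn: "p dvd n" using p g by (meson dvd_trans)
  define e where "e = n div p"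
  have ne: "n = p * e" using pn by (simp add: e_def)
  have edvd: "e dvd n" using ne by simp
  have "e \<noteq> n"
  proof
    assume "e = n"
    hence "n = p * n" using ne by simp
    hence "p = 1" using n0 by simp
    thus False using p(1) by simp
  qed
  hence L: "lcm g e \<noteq> n" using E edvd by (simp add: ess_def)
  have "\<not> p dvd e"
  proof
    assume "p dvd e"
    hence "p * p dvd n" using ne by simp
    hence "p dvd 1" using s squarefreeD by (metis power2_eq_square)
    thus False using p by simp
  qed
  hence cop: "coprime p e" using p by (simp add: prime_imp_coprime)
  have "p dvd lcm g e" using p by (meson dvd_lcm1 dvd_trans)
  moreover have "e dvd lcm g e" by simp
  ultimately have "p * e dvd lcm g e" using cop by (simp add: divides_mult)
  hence "n dvd lcm g e" using ne by simp
  moreover have "lcm g e dvd n" using g edvd by simp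
  ultimately show False using L by (simp add: dvd_antisym)
qed

lemma isolated_not_conn:
  assumes n: "n \<ge> 2" and p: "p \<in> Dv n"
    and iso: "\<And>e. e \<in> Dv n \<Longrightarrow> e \<noteq> p \<Longrightarrow> ess n (gcd p e)"
    and two: "\<exists>I\<in>EIG_vertices (Zn n). \<exists>K\<in>EIG_vertices (Zn n). I \<noteq> K"
  shows "\<not> graph_connected (EIG_vertices (Zn n)) (EIG_compl_adj (Zn n))"
proof
  assume C: "graph_connected (EIG_vertices (Zn n)) (EIG_compl_adj (Zn n))"
  have V: "EIG_vertices (Zn n) = IdZ n ` Dv n" by (rule vertices_eq[OF n])
  obtain w where w: "w \<in> EIG_vertices (Zn n)" "w \<noteq> IdZ n p" using two by metis
  have pv: "IdZ n p \<in> EIG_vertices (Zn n)" using V p by blast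
  have "(EIG_compl_adj (Zn n))\<^sup>*\<^sup>* (IdZ n p) w" using C pv w unfolding graph_connected_def by blast
  then show False
  proof (cases rule: converse_rtranclpE)
    case base thus False using w by simp
  next
    case (step y)
    hence "y \<in> EIG_vertices (Zn n)" by (simp add: EIG_compl_adj_def)
    then obtain e where e: "e \<in> Dv n" "y = IdZ n e" using V by blast
    have "p \<noteq> e \<and> \<not> ess n (gcd p e)" using step(1) e compl_adj_eq[OF n p e(1)] by simp
    thus False using iso[OF e(1)] by auto
  qed
qed

lemma path_step: assumes n: "n \<ge> 2" and s: "squarefree n" and d: "d \<in> Dv n" and e: "e \<in> Dv n"
  and p: "nprime p" "p dvd d" "p dvd e"
  shows "(EIG_compl_adj (Zn n))\<^sup>*\<^sup>* (IdZ n d) (IdZ n e)"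
proof (cases "d = e")
  case True thus ?thesis by simp
next
  case False
  have "p dvd gcd d e" using p by simp
  have g1: "gcd d e \<noteq> 1"
  proof
    assume "gcd d e = 1"
    hence "p = 1" using \<open>p dvd gcd d e\<close> by simp
    thus False using p(1) by simp
  qed
  have "gcd d e dvd n" using d unfolding Dv_def by (blast intro: dvd_trans[OF gcd_dvd1])
  hence "\<not> ess n (gcd d e)" using not_ess_sqf[OF s _ g1] by blast
  hence "EIG_compl_adj (Zn n) (IdZ n d) (IdZ n e)" using compl_adj_eq[OF n d e] False by blast
  thus ?thesis by simp
qed


lemma pf_dvd: "nprime r \<Longrightarrow> r dvd n \<Longrightarrow> n \<noteq> 0 \<Longrightarrow> r \<in> prime_factors n"
  by (simp add: in_prime_factors_iff)

lemma div_dvd_self: "d dvd (n::nat) \<Longrightarrow> n div d dvd n"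
  by (metis dvd_div_mult_self dvd_triv_left)

lemma cofactor_prime: assumes "e dvd (n::nat)" "e \<noteq> n" "n \<noteq> 0"
  obtains s where "nprime s" "s dvd n div e"
proof -
  have "n div e \<noteq> 1" using assms by (metis dvd_mult_div_cancel mult.right_neutral)
  thus ?thesis using prime_factor_nat that by blast
qed

theorem mainTheorem14:
  fixes n :: nat
  assumes "n \<ge> 2"
    and "\<exists>I\<in>EIG_vertices (Zn n). \<exists>K\<in>EIG_vertices (Zn n). I \<noteq> K"
  shows "graph_connected (EIG_vertices (Zn n)) (EIG_compl_adj (Zn n)) \<longleftrightarrow>
         squarefree n \<and> card (prime_factors n) \<ge> 3"
proof -
  note n = assms(1) and two = assms(2)
  have n0: "n \<noteq> 0" using n by simp
  have V: "EIG_vertices (Zn n) = IdZ n ` Dv n" by (rule vertices_eq[OF n])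
  show ?thesis
  proof
    assume C: "graph_connected (EIG_vertices (Zn n)) (EIG_compl_adj (Zn n))"
    have sq: "squarefree n"
    proof (rule ccontr)
      assume "\<not> squarefree n"
      then obtain x where x: "x^2 dvd n" "\<not> x dvd 1" by (rule not_squarefreeE)
      hence "x \<noteq> 1" by auto
      then obtain p where p: "nprime p" "p dvd x" using prime_factor_nat by blast
      have p2: "p^2 dvd n" using p x by (meson dvd_trans dvd_power_same)
      have p1: "p > 1" using p(1) prime_nat_iff by blast
      have pn: "p dvd n" using p2 by (meson dvd_trans dvd_power pos2)
      have "p \<noteq> n"
      proof
        assume "p = n"
        hence "p * p dvd p * 1" using p2 by (simp add: power2_eq_square)
        hence "p dvd 1" using p1 by (simp only: nat_mult_dvd_cancel_disj) simp
        thus False using p1 by simp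
      qed
      hence pD: "p \<in> Dv n" using pn p1 by (simp add: Dv_def)
      have "ess n (gcd p e)" if "e \<in> Dv n" "e \<noteq> p" for e
      proof -
        have "gcd p e dvd p" by simp
        hence "gcd p e = 1 \<or> gcd p e = p" using p(1) by (simp add: prime_nat_iff)
        thus ?thesis using ess_one ess_prime_sq[OF p(1) p2] n0 by auto
      qed
      thus False using isolated_not_conn[OF n pD _ two] C by blast
    qed
    have ne: "prime_factors n \<noteq> {}"
    proof -
      obtain r where "nprime r" "r dvd n" using prime_factor_nat[of n] n by auto
      thus ?thesis using pf_dvd n0 by blast
    qed
    have "card (prime_factors n) \<ge> 1" using ne by (simp add: Suc_leI card_gt_0_iff)
    moreover have "card (prime_factors n) \<noteq> 1"
    proof
      assume "card (prime_factors n) = 1"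
      then obtain p where P: "prime_factors n = {p}" by (rule card_1_singletonE)
      have "Dv n = {}"
      proof (rule ccontr)
        assume "Dv n \<noteq> {}"
        then obtain d where d: "d dvd n" "d \<noteq> 1" "d \<noteq> n" by (auto simp: Dv_def)
        obtain r where r: "nprime r" "r dvd d" using prime_factor_nat d(2) by blast
        obtain s where s: "nprime s" "s dvd n div d" using cofactor_prime[OF d(1,3) n0] by blast
        have "r \<in> prime_factors n" using r d pf_dvd n0 by (meson dvd_trans)
        hence rp: "r = p" using P by simp
        have "s dvd n" using s(2) div_dvd_self[OF d(1)] by (rule dvd_trans)
        hence "s \<in> prime_factors n" using pf_dvd[OF s(1) _ n0] by blast
        hence "s = p" using P by simp
        thus False using sqf_prime_div[OF sq d(1) r(1,2)] s rp by simp
      qed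
      thus False using two V by auto
    qed
    moreover have "card (prime_factors n) \<noteq> 2"
    proof
      assume "card (prime_factors n) = 2"
      then obtain p q where P: "prime_factors n = {p, q}" "p \<noteq> q" by (meson card_2_iff)
      have pp: "nprime p" "p dvd n" "nprime q" "q dvd n" using P(1) by (auto simp: in_prime_factors_iff)
      have "p \<noteq> n"
      proof
        assume "p = n"
        hence "q dvd p" using pp by simp
        hence "q = 1 \<or> q = p" using pp(1) by (simp add: prime_nat_iff)
        thus False using pp(3) P(2) by auto
      qed
      hence pD: "p \<in> Dv n" using pp by (auto simp: Dv_def)
      have "ess n (gcd p e)" if e: "e \<in> Dv n" "e \<noteq> p" for e
      proof (cases "gcd p e = 1")
        case True thus ?thesis using ess_one by simp
      next
        case False
        have "gcd p e dvd p" by simp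
        hence "gcd p e = p" using pp(1) False unfolding prime_nat_iff by blast
        hence pe: "p dvd e" by (metis gcd_dvd2)
        have ed: "e dvd n" "e \<noteq> n" "e \<noteq> 1" using e by (auto simp: Dv_def)
        have "e div p \<noteq> 1" using pe e(2) by auto
        then obtain r where r: "nprime r" "r dvd e div p" using prime_factor_nat by blast
        have re: "r dvd e" using r(2) div_dvd_self[OF pe] by (rule dvd_trans)
        hence "r \<in> prime_factors n" using r(1) ed(1) pf_dvd n0 by (meson dvd_trans)
        hence "r = p \<or> r = q" using P by simp
        moreover have "r \<noteq> p"
        proof
          assume "r = p"
          hence "p * p dvd p * (e div p)" using r(2) by simp
          also have "p * (e div p) = e" using pe by simp
          finally have "p^2 dvd n" using ed(1) by (metis dvd_trans power2_eq_square)
          hence "p dvd 1" using sq squarefreeD by blast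
          thus False using pp(1) by simp
        qed
        ultimately have qe: "q dvd e" using re by simp
        obtain s where s: "nprime s" "s dvd n div e" using cofactor_prime[OF ed(1,2) n0] by blast
        have "s dvd n" using s(2) div_dvd_self[OF ed(1)] by (rule dvd_trans)
        hence "s \<in> prime_factors n" using pf_dvd[OF s(1) _ n0] by blast
        hence "s dvd e" using P pe qe by auto
        thus ?thesis using sqf_prime_div[OF sq ed(1) s(1)] s by simp
      qed
      thus False using isolated_not_conn[OF n pD _ two] C by blast
    qed
    ultimately have "card (prime_factors n) \<ge> 3" by linarith
    thus "squarefree n \<and> card (prime_factors n) \<ge> 3" using sq by simp
  next
    assume A: "squarefree n \<and> card (prime_factors n) \<ge> 3"
    hence sq: "squarefree n" and k: "card (prime_factors n) \<ge> 3" by auto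
    let ?A = "EIG_compl_adj (Zn n)"
    have primeD: "p \<in> Dv n" if p: "nprime p" "p dvd n" for p
    proof -
      have "p \<noteq> n"
      proof
        assume "p = n"
        hence "prime_factors n = {p}" using p(1) by (simp add: prime_prime_factors)
        thus False using k by simp
      qed
      thus ?thesis using p by (auto simp: Dv_def)
    qed
    show "graph_connected (EIG_vertices (Zn n)) ?A" unfolding graph_connected_def
    proof (intro ballI)
      fix I K assume IK: "I \<in> EIG_vertices (Zn n)" "K \<in> EIG_vertices (Zn n)"
      have "I \<in> IdZ n ` Dv n" "K \<in> IdZ n ` Dv n" using IK V by simp_all
      then obtain d e where d: "d \<in> Dv n" "I = IdZ n d" and e: "e \<in> Dv n" "K = IdZ n e"
        by blast
      have dd: "d dvd n" "d \<noteq> 1" using d(1) by (simp_all add: Dv_def)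
      have ee: "e dvd n" "e \<noteq> 1" using e(1) by (simp_all add: Dv_def)
      obtain p where p: "nprime p" "p dvd d" using prime_factor_nat dd(2) by blast
      obtain q where q: "nprime q" "q dvd e" using prime_factor_nat ee(2) by blast
      have pn: "p dvd n" using p(2) dd(1) by (rule dvd_trans)
      have qn: "q dvd n" using q(2) ee(1) by (rule dvd_trans)
      have pD: "p \<in> Dv n" by (rule primeD[OF p(1) pn])
      have qD: "q \<in> Dv n" by (rule primeD[OF q(1) qn])
      have s1: "?A\<^sup>*\<^sup>* (IdZ n d) (IdZ n p)" using path_step[OF n sq d(1) pD p(1) p(2)] by simp
      have s4: "?A\<^sup>*\<^sup>* (IdZ n q) (IdZ n e)" using path_step[OF n sq qD e(1) q(1) _ q(2)] by simp
      have mid: "?A\<^sup>*\<^sup>* (IdZ n p) (IdZ n q)"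
      proof (cases "p = q")
        case True thus ?thesis by simp
      next
        case False
        have cop: "coprime p q" using p(1) q(1) False by (simp add: primes_coprime)
        have mn: "p * q dvd n" using cop pn qn by (simp add: divides_mult)
        have m1: "p * q \<noteq> 1"
        proof
          assume "p * q = 1"
          hence "p dvd 1" by (metis dvd_triv_left)
          hence "p = 1" by simp
          thus False using p(1) by simp
        qed
        have "p * q \<noteq> n"
        proof
          assume "p * q = n"
          hence "prime_factors n = prime_factors p \<union> prime_factors q"
            using prime_factors_product p(1) q(1) by (metis not_prime_0)
          hence "prime_factors n = {p, q}" using p(1) q(1) by (auto simp add: prime_prime_factors)
          hence "card (prime_factors n) \<le> 2" by (simp add: card_insert_le_m1)
          thus False using k by simp
        qed
        hence mD: "p * q \<in> Dv n" using mn m1 by (simp add: Dv_def)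
        have "?A\<^sup>*\<^sup>* (IdZ n p) (IdZ n (p * q))" using path_step[OF n sq pD mD p(1)] by simp
        moreover have "?A\<^sup>*\<^sup>* (IdZ n (p * q)) (IdZ n q)" using path_step[OF n sq mD qD q(1)] by simp
        ultimately show ?thesis by (rule rtranclp_trans)
      qed
      show "?A\<^sup>*\<^sup>* I K" using s1 mid s4 d(2) e(2) by (meson rtranclp_trans)
    qed
  qed
qed

end
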